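(* Let $J'=(z_w,z_w')$ be a nonempty open interval, let $r:J'\to\mathbb{R}$ be differentiable and non-increasing, and let $h:J'\to\mathbb{R}$ be differentiable with $\dot h(z)=1+h(z)^2-2r(z)h(z)$ on $J'$, having exactly one zero $z_*\in J'$. Let $G(z)=z-\dfrac{2h(z)}{2+h(z)^2-2r(z)h(z)}$ and $z_{n+1}=G(z_n)$. (1) If $0<r(z)<1$ for all $z\in(z_*,z_w')$, then for every $z_0\in(z_*,z_w')$ all iterates are well defined, and $(z_n)$ is monotonically decreasing, stays in $(z_*,z_w')$, and converges to $z_*$. (2) If $-1<r(z)<0$ for all $z\in(z_w,z_* )$, then for every $z_0\in(z_w,z_* )$ all iterates are well defined, and $(z_n)$ is monotonically increasing, stays in $(z_w,z_* )$, and converges to $z_*$.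
   Context: $\dot{}$ denotes differentiation with respect to $z$. Here $h<0$ on $(z_w,z_* )$ and $h>0$ on $(z_*,z_w')$. *)

theory Defs
  imports Complex_Main
begin

definition den :: "(real \<Rightarrow> real) \<Rightarrow> (real \<Rightarrow> real) \<Rightarrow> real \<Rightarrow> real" where
  "den r h z = 2 + (h z)^2 - 2 * r z * h z"

definition Gmap :: "(real \<Rightarrow> real) \<Rightarrow> (real \<Rightarrow> real) \<Rightarrow> real \<Rightarrow> real" where
  "Gmap r h z = z - 2 * h z / den r h z"

end

theory Submission
  imports Defs
begin


lemma ineq:
  fixes x \<rho> d :: real
  assumes "x \<noteq> 0" "-1 < \<rho>" "\<rho> < 1" "0 < d" "d \<le> 1 + x^2 - 2*\<rho>*x"
  shows "(4 - 2*x^2) * d < (2 + x^2 - 2*\<rho>*x)^2"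
proof -
  define f where "f = 1 + x^2 - 2*\<rho>*x"
  have fpos: "f > 0"
  proof -
    have "f = (x-\<rho>)^2 + (1 - \<rho>^2)" unfolding f_def by (simp add: power2_eq_square algebra_simps)
    moreover have "\<rho>^2 < 1" using assms by (simp add: abs_less_iff power2_eq_square) (smt (verit) mult_less_cancel_left1 mult_less_cancel_right2 mult_minus_left mult_minus_right) 
    ultimately show ?thesis by (smt (verit) zero_le_power2)
  qed
  have x2: "x^2 > 0" using assms by simp
  have key: "(2 + x^2 - 2*\<rho>*x)^2 - (4 - 2*x^2) * f = (1-f)^2 + 2*x^2*f"
    unfolding f_def by (simp add: power2_eq_square algebra_simps)
  have pos: "(1-f)^2 + 2*x^2*f > 0" using fpos x2 by (smt (verit) mult_pos_pos zero_le_power2)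
  show ?thesis
  proof (cases "4 - 2*x^2 \<le> 0")
    case True
    then have "(4 - 2*x^2) * d \<le> 0" using assms by (simp add: mult_nonpos_nonneg)
    moreover have "(2 + x^2 - 2*\<rho>*x)^2 > 0" using fpos unfolding f_def by (smt (verit) zero_less_power)
    ultimately show ?thesis by linarith
  next
    case False
    then have "(4 - 2*x^2) * d \<le> (4 - 2*x^2) * f" using assms unfolding f_def by (intro mult_left_mono) auto
    then show ?thesis using key pos by linarith
  qed
qed

lemma key:
  fixes h d :: "real \<Rightarrow> real" and a b \<rho> :: real
  assumes "a < b" "-1<\<rho>" "\<rho><1" "continuous_on {a..b} h"
   "\<And>t. a<t \<Longrightarrow> t<b \<Longrightarrow> (h has_real_derivative d t) (at t)"
   "\<And>t. a<t \<Longrightarrow> t<b \<Longrightarrow> h t \<noteq> 0"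
   "\<And>t. a<t \<Longrightarrow> t<b \<Longrightarrow> 0 < d t \<and> d t \<le> 1 + (h t)^2 - 2*\<rho>*h t"
  shows "a - 2*h a/(2+(h a)^2-2*\<rho>*h a) < b - 2*h b/(2+(h b)^2 - 2*\<rho>*h b)"
proof -
  have Dpos: "2 + x^2 - 2*\<rho>*x > 0" for x :: real
  proof -
    have "2 + x^2 - 2*\<rho>*x = (x-\<rho>)^2 + (2 - \<rho>^2)" by (simp add: power2_eq_square algebra_simps)
    moreover have "\<rho>^2 < 1" using assms by (simp add: abs_less_iff power2_eq_square) (smt (verit) mult_less_cancel_left1 mult_less_cancel_right2 mult_minus_left mult_minus_right) 
    ultimately show ?thesis by (smt (verit) zero_le_power2)
  qed
  let ?F = "\<lambda>t. t - 2*h t/(2+(h t)^2-2*\<rho>*h t)"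
  show ?thesis
  proof (rule DERIV_pos_imp_increasing_open[of a b ?F])
    show "a < b" by fact
    fix t assume t: "a < t" "t < b"
    define x where "x = h t"
    define D where "D = 2 + x^2 - 2*\<rho>*x"
    have D: "D > 0" unfolding D_def by (rule Dpos)
    have "(?F has_real_derivative 1 - (2*d t*D - 2*x*(2*x*d t - 2*\<rho>*d t)) / D^2) (at t)"
      using assms(5)[OF t] D unfolding D_def x_def
      by (auto intro!: derivative_eq_intros simp: power2_eq_square)
    moreover have "1 - (2*d t*D - 2*x*(2*x*d t - 2*\<rho>*d t)) / D^2 > 0"
    proof -
      have e: "2*d t*D - 2*x*(2*x*d t - 2*\<rho>*d t) = (4 - 2*x^2) * d t"
        unfolding D_def by (simp add: power2_eq_square algebra_simps)
      have "(4 - 2*x^2) * d t < D^2" unfolding D_def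
        using ineq[of x \<rho> "d t"] assms(2,3) assms(6,7)[OF t] x_def by auto
      then show ?thesis using D by (simp add: e)
    qed
    ultimately show "\<exists>y. (?F has_real_derivative y) (at t) \<and> 0 < y" by blast
  next
    have "continuous_on {a..b} (\<lambda>t. 2+(h t)^2-2*\<rho>*h t)" using assms(4) by (intro continuous_intros)
    then show "continuous_on {a..b} ?F" using assms(4) Dpos
      by (intro continuous_intros) (auto simp: less_imp_neq[symmetric] dest: order.strict_implies_not_eq)
  qed
qed


lemma fpos:
  fixes x \<rho> :: real
  assumes "-1 < \<rho>" "\<rho> < 1"
  shows "1 + x^2 - 2*\<rho>*x > 0"
proof -
  have "1 + x^2 - 2*\<rho>*x = (x-\<rho>)^2 + (1 - \<rho>^2)" by (simp add: power2_eq_square algebra_simps)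
  moreover have "\<rho>^2 < 1" using assms by (simp add: abs_less_iff power2_eq_square) (smt (verit) mult_less_cancel_left1 mult_less_cancel_right2 mult_minus_left mult_minus_right)
  ultimately show ?thesis by (smt (verit) zero_le_power2)
qed

lemma fixpt:
  fixes G :: "real \<Rightarrow> real" and X :: "nat \<Rightarrow> real"
  assumes "X \<longlonglongrightarrow> L" "\<And>n. X (Suc n) = G (X n)" "isCont G L"
  shows "G L = L"
proof -
  have "(\<lambda>n. G (X n)) \<longlonglongrightarrow> G L" using assms(1,3) isCont_tendsto_compose by blast
  moreover have "(\<lambda>n. G (X n)) \<longlonglongrightarrow> L" using LIMSEQ_Suc[OF assms(1)] assms(2) by simp
  ultimately show ?thesis using LIMSEQ_unique by blast
qed

theorem theorem3p4:
  fixes r h :: "real \<Rightarrow> real" and zw zw' zs :: real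
  assumes nonempty: "zw < zw'"
    and r_diff: "\<forall>z\<in>{zw<..<zw'}. r differentiable (at z)"
    and r_noninc: "\<forall>x\<in>{zw<..<zw'}. \<forall>y\<in>{zw<..<zw'}. x \<le> y \<longrightarrow> r y \<le> r x"
    and h_ode: "\<forall>z\<in>{zw<..<zw'}. (h has_real_derivative (1 + (h z)^2 - 2 * r z * h z)) (at z)"
    and zs_in: "zs \<in> {zw<..<zw'}"
    and h_zs: "h zs = 0"
    and h_unique_zero: "\<forall>z\<in>{zw<..<zw'}. h z = 0 \<longrightarrow> z = zs"
    and h_neg: "\<forall>z\<in>{zw<..<zs}. h z < 0"
    and h_pos: "\<forall>z\<in>{zs<..<zw'}. h z > 0"
  shows
    "((\<forall>z\<in>{zs<..<zw'}. 0 < r z \<and> r z < 1) \<longrightarrow>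
       (\<forall>z0\<in>{zs<..<zw'}.
          let zn = (\<lambda>n. (Gmap r h ^^ n) z0) in
          (\<forall>n. zn n \<in> {zs<..<zw'} \<and> den r h (zn n) \<noteq> 0) \<and>
          decseq zn \<and> zn \<longlonglongrightarrow> zs))
   \<and> ((\<forall>z\<in>{zw<..<zs}. -1 < r z \<and> r z < 0) \<longrightarrow>
       (\<forall>z0\<in>{zw<..<zs}.
          let zn = (\<lambda>n. (Gmap r h ^^ n) z0) in
          (\<forall>n. zn n \<in> {zw<..<zs} \<and> den r h (zn n) \<noteq> 0) \<and>
          incseq zn \<and> zn \<longlonglongrightarrow> zs))"
proof -
  let ?I = "{zw<..<zw'}"
  have hcont: "isCont h z" if "z \<in> ?I" for z using h_ode that DERIV_isCont by blast
  have rcont: "isCont r z" if "z \<in> ?I" for z using r_diff that by (metis DERIV_isCont real_differentiable_def)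
  have hcon: "continuous_on {a..b} h" if "zw < a" "b < zw'" for a b
    using hcont that by (intro continuous_at_imp_continuous_on) auto
  have Gcont: "isCont (Gmap r h) z" if "z \<in> ?I" "den r h z \<noteq> 0" for z
  proof -
    have "isCont (\<lambda>z. z - 2 * h z / (2 + (h z)^2 - 2 * r z * h z)) z"
      using hcont[OF that(1)] rcont[OF that(1)] that(2) unfolding den_def
      by (intro continuous_intros) auto
    then show ?thesis unfolding Gmap_def[abs_def] den_def by simp
  qed
  have P1: "Gmap r h z \<in> {zs<..<zw'} \<and> den r h z \<noteq> 0 \<and> Gmap r h z < z"
    if rb: "\<forall>z\<in>{zs<..<zw'}. 0 < r z \<and> r z < 1" and z: "z \<in> {zs<..<zw'}" for z
  proof -
    have rz: "-1 < r z" "r z < 1" using rb z by force+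
    have dz: "den r h z > 0" unfolding den_def using fpos[OF rz, of "h z"] by auto
    have hz: "h z > 0" using h_pos z by auto
    have lt: "Gmap r h z < z" unfolding Gmap_def using dz hz by simp
    have "zs - 2*h zs/(2+(h zs)^2-2*r z*h zs) < z - 2*h z/(2+(h z)^2 - 2*r z*h z)"
    proof (rule key[where d="\<lambda>t. 1 + (h t)^2 - 2 * r t * h t"])
      show "zs < z" using z by simp
      show "-1 < r z" "r z < 1" using rz by auto
      show "continuous_on {zs..z} h" using hcon zs_in z by auto
      fix t assume t: "zs < t" "t < z"
      then have tI: "t \<in> ?I" using zs_in z by auto
      show "(h has_real_derivative 1 + (h t)^2 - 2 * r t * h t) (at t)" using h_ode tI by auto
      have rt: "-1 < r t" "r t < 1" using rb t z by force+
      have ht: "h t > 0" using h_pos t z by auto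
      then show "h t \<noteq> 0" by simp
      have "r z \<le> r t" using r_noninc tI z t by auto
      then have "(r z - r t) * h t \<le> 0" using ht by (simp add: mult_nonpos_nonneg)
      moreover have "0 < 1 + (h t)^2 - 2 * r t * h t" using fpos rt by blast
      ultimately show "0 < 1 + (h t)^2 - 2 * r t * h t \<and> 1 + (h t)^2 - 2 * r t * h t \<le> 1 + (h t)^2 - 2 * r z * h t"
        by (auto simp: algebra_simps)
    qed
    then have "zs < Gmap r h z" using h_zs unfolding Gmap_def den_def by simp
    then show ?thesis using lt dz z by auto
  qed
  have P2: "Gmap r h z \<in> {zw<..<zs} \<and> den r h z \<noteq> 0 \<and> z < Gmap r h z"
    if rb: "\<forall>z\<in>{zw<..<zs}. -1 < r z \<and> r z < 0" and z: "z \<in> {zw<..<zs}" for z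
  proof -
    have rz: "-1 < r z" "r z < 1" using rb z by force+
    have dz: "den r h z > 0" unfolding den_def using fpos[OF rz, of "h z"] by auto
    have hz: "h z < 0" using h_neg z by auto
    have lt: "z < Gmap r h z" unfolding Gmap_def using dz hz by (simp add: divide_neg_pos)
    have "z - 2*h z/(2+(h z)^2-2*r z*h z) < zs - 2*h zs/(2+(h zs)^2 - 2*r z*h zs)"
    proof (rule key[where d="\<lambda>t. 1 + (h t)^2 - 2 * r t * h t"])
      show "z < zs" using z by simp
      show "-1 < r z" "r z < 1" using rz by auto
      show "continuous_on {z..zs} h" using hcon zs_in z by auto
      fix t assume t: "z < t" "t < zs"
      then have tI: "t \<in> ?I" using zs_in z by auto
      show "(h has_real_derivative 1 + (h t)^2 - 2 * r t * h t) (at t)" using h_ode tI by auto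
      have "r t \<in> {-1<..<0}" using rb t z by auto
      then have rt: "-1 < r t" "r t < 1" by auto
      have ht: "h t < 0" using h_neg t z by auto
      then show "h t \<noteq> 0" by simp
      have "r t \<le> r z" using r_noninc tI z t by auto
      then have "(r z - r t) * h t \<le> 0" using ht by (simp add: mult_nonneg_nonpos)
      moreover have "0 < 1 + (h t)^2 - 2 * r t * h t" using fpos rt by blast
      ultimately show "0 < 1 + (h t)^2 - 2 * r t * h t \<and> 1 + (h t)^2 - 2 * r t * h t \<le> 1 + (h t)^2 - 2 * r z * h t"
        by (auto simp: algebra_simps)
    qed
    then have "Gmap r h z < zs" using h_zs unfolding Gmap_def den_def by simp
    then show ?thesis using lt dz z by auto
  qed
  show ?thesis
  proof (intro conjI impI ballI)
    fix z0 assume rb: "\<forall>z\<in>{zs<..<zw'}. 0 < r z \<and> r z < 1" and z0: "z0 \<in> {zs<..<zw'}"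
    define X where "X = (\<lambda>n. (Gmap r h ^^ n) z0)"
    have XS: "X (Suc n) = Gmap r h (X n)" for n unfolding X_def by simp
    have inv: "X n \<in> {zs<..<zw'}" for n
      by (induction n) (use z0 P1[OF rb] in \<open>auto simp: XS X_def\<close>)
    have dec: "decseq X" using P1[OF rb inv] XS by (intro decseq_SucI) (simp add: less_imp_le)
    obtain L where L: "X \<longlonglongrightarrow> L" "\<forall>i. L \<le> X i"
      using decseq_convergent[OF dec, of zs] inv by (metis greaterThanLessThan_iff less_imp_le)
    have Lge: "zs \<le> L" using LIMSEQ_le_const[OF L(1), of zs] inv by (auto simp: less_imp_le)
    have "L = zs"
    proof (rule ccontr)
      assume "L \<noteq> zs"
      then have Lin: "L \<in> {zs<..<zw'}" using Lge L(2) inv[of 0] by (auto intro: le_less_trans)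
      have LI: "L \<in> ?I" using Lin zs_in by auto
      have "Gmap r h L = L" using fixpt[OF L(1) XS Gcont[OF LI]] P1[OF rb Lin] by auto
      then show False using P1[OF rb Lin] by simp
    qed
    then show "let zn = (\<lambda>n. (Gmap r h ^^ n) z0) in
          (\<forall>n. zn n \<in> {zs<..<zw'} \<and> den r h (zn n) \<noteq> 0) \<and> decseq zn \<and> zn \<longlonglongrightarrow> zs"
      using inv P1[OF rb inv] dec L(1) unfolding X_def Let_def by auto
  next
    fix z0 assume rb: "\<forall>z\<in>{zw<..<zs}. -1 < r z \<and> r z < 0" and z0: "z0 \<in> {zw<..<zs}"
    define X where "X = (\<lambda>n. (Gmap r h ^^ n) z0)"
    have XS: "X (Suc n) = Gmap r h (X n)" for n unfolding X_def by simp
    have inv: "X n \<in> {zw<..<zs}" for n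
      by (induction n) (use z0 P2[OF rb] in \<open>auto simp: XS X_def\<close>)
    have inc: "incseq X" using P2[OF rb inv] XS by (intro incseq_SucI) (simp add: less_imp_le)
    obtain L where L: "X \<longlonglongrightarrow> L" "\<forall>i. X i \<le> L"
      using incseq_convergent[OF inc, of zs] inv by (metis greaterThanLessThan_iff less_imp_le)
    have Lle: "L \<le> zs" using LIMSEQ_le_const2[OF L(1), of zs] inv by (auto simp: less_imp_le)
    have "L = zs"
    proof (rule ccontr)
      assume "L \<noteq> zs"
      then have Lin: "L \<in> {zw<..<zs}" using Lle L(2) inv[of 0] by (auto intro: less_le_trans)
      have LI: "L \<in> ?I" using Lin zs_in by auto
      have "Gmap r h L = L" using fixpt[OF L(1) XS Gcont[OF LI]] P2[OF rb Lin] by auto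
      then show False using P2[OF rb Lin] by simp
    qed
    then show "let zn = (\<lambda>n. (Gmap r h ^^ n) z0) in
          (\<forall>n. zn n \<in> {zw<..<zs} \<and> den r h (zn n) \<noteq> 0) \<and> incseq zn \<and> zn \<longlonglongrightarrow> zs"
      using inv P2[OF rb inv] inc L(1) unfolding X_def Let_def by auto
  qed
qed

end
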